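(* Let $t>0$ and let $G$ be a graph containing neither $K_t$ nor $K_{t,t}$ as an induced subgraph. Then $\operatorname{tw}(G)\le 3(R(t,t)-1)\,2^{\operatorname{rw}(G)+1}-1$.
   Context: All graphs are finite and simple. $\operatorname{tw}$ denotes treewidth and $\operatorname{rw}$ denotes rank-width (in the sense of Oum and Seymour). $R(t,t)$ is the Ramsey number: every graph on at least $R(t,t)$ vertices contains a clique or a stable set of size $t$. *)

theory Defs
  imports Main HOL.Vector_Spaces "HOL-Library.Z2" "HOL-Library.Function_Algebras"
begin

definition simple_graph :: "'a set \<Rightarrow> ('a \<Rightarrow> 'a \<Rightarrow> bool) \<Rightarrow> bool" where
  "simple_graph V E \<longleftrightarrow> finite V \<and> (\<forall>x y. E x y \<longrightarrow> x \<in> V \<and> y \<in> V \<and> x \<noteq> y)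
     \<and> (\<forall>x y. E x y \<longrightarrow> E y x)"

definition is_clique :: "('a \<Rightarrow> 'a \<Rightarrow> bool) \<Rightarrow> 'a set \<Rightarrow> bool" where
  "is_clique E S \<longleftrightarrow> (\<forall>x\<in>S. \<forall>y\<in>S. x \<noteq> y \<longrightarrow> E x y)"

definition is_stable :: "('a \<Rightarrow> 'a \<Rightarrow> bool) \<Rightarrow> 'a set \<Rightarrow> bool" where
  "is_stable E S \<longleftrightarrow> (\<forall>x\<in>S. \<forall>y\<in>S. \<not> E x y)"

definition has_induced_Kt :: "'a set \<Rightarrow> ('a \<Rightarrow> 'a \<Rightarrow> bool) \<Rightarrow> nat \<Rightarrow> bool" where
  "has_induced_Kt V E t \<longleftrightarrow> (\<exists>S\<subseteq>V. card S = t \<and> is_clique E S)"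

definition has_induced_Ktt :: "'a set \<Rightarrow> ('a \<Rightarrow> 'a \<Rightarrow> bool) \<Rightarrow> nat \<Rightarrow> bool" where
  "has_induced_Ktt V E t \<longleftrightarrow> (\<exists>A B. A \<subseteq> V \<and> B \<subseteq> V \<and> A \<inter> B = {} \<and> card A = t \<and> card B = t
      \<and> is_stable E A \<and> is_stable E B \<and> (\<forall>a\<in>A. \<forall>b\<in>B. E a b))"

text \<open>Ramsey number R(t,t): least n such that every graph on at least n vertices
  has a clique or a stable set of size t (graphs on natural-number vertices
  represent all finite graphs up to isomorphism).\<close>
definition ramsey_number :: "nat \<Rightarrow> nat" where
  "ramsey_number t = (LEAST n. \<forall>(V::nat set) E. simple_graph V E \<and> card V \<ge> n \<longrightarrow>
      (\<exists>S\<subseteq>V. card S = t \<and> (is_clique E S \<or> is_stable E S)))"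

definition tree_adj :: "nat set set \<Rightarrow> (nat \<times> nat) set" where
  "tree_adj F = {(x, y). {x, y} \<in> F \<and> x \<noteq> y}"

definition is_tree :: "nat set \<Rightarrow> nat set set \<Rightarrow> bool" where
  "is_tree N F \<longleftrightarrow> finite N \<and> N \<noteq> {}
     \<and> (\<forall>e\<in>F. \<exists>x y. e = {x, y} \<and> x \<in> N \<and> y \<in> N \<and> x \<noteq> y)
     \<and> (\<forall>x\<in>N. \<forall>y\<in>N. (x, y) \<in> (tree_adj F)\<^sup>*)
     \<and> card F = card N - 1"

definition tree_connected_subset :: "nat set set \<Rightarrow> nat set \<Rightarrow> bool" where
  "tree_connected_subset F X \<longleftrightarrow>
     (\<forall>x\<in>X. \<forall>y\<in>X. (x, y) \<in> (tree_adj F \<inter> (X \<times> X))\<^sup>*)"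

definition tree_degree :: "nat set set \<Rightarrow> nat \<Rightarrow> nat" where
  "tree_degree F x = card {e\<in>F. x \<in> e}"

definition is_tree_decomposition ::
  "'a set \<Rightarrow> ('a \<Rightarrow> 'a \<Rightarrow> bool) \<Rightarrow> nat set \<Rightarrow> nat set set \<Rightarrow> (nat \<Rightarrow> 'a set) \<Rightarrow> bool" where
  "is_tree_decomposition V E N F bag \<longleftrightarrow> is_tree N F
     \<and> (\<forall>x\<in>N. bag x \<subseteq> V)
     \<and> (\<forall>v\<in>V. \<exists>x\<in>N. v \<in> bag x)
     \<and> (\<forall>u v. E u v \<longrightarrow> (\<exists>x\<in>N. u \<in> bag x \<and> v \<in> bag x))
     \<and> (\<forall>v\<in>V. tree_connected_subset F {x\<in>N. v \<in> bag x})"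

definition td_width :: "nat set \<Rightarrow> (nat \<Rightarrow> 'a set) \<Rightarrow> int" where
  "td_width N bag = int (Max ((\<lambda>x. card (bag x)) ` N)) - 1"

definition treewidth :: "'a set \<Rightarrow> ('a \<Rightarrow> 'a \<Rightarrow> bool) \<Rightarrow> int" where
  "treewidth V E = Min {td_width N bag | N F bag. is_tree_decomposition V E N F bag}"

text \<open>Cut-rank: the rank over GF(2) of the X \<times> (V - X) adjacency submatrix,
  i.e. the dimension of the GF(2)-span of its rows.\<close>
definition cut_rank :: "'a set \<Rightarrow> ('a \<Rightarrow> 'a \<Rightarrow> bool) \<Rightarrow> 'a set \<Rightarrow> nat" where
  "cut_rank V E X = vector_space.dim (\<lambda>(c::bit) (f::'a \<Rightarrow> bit). \<lambda>y. c * f y)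
     ((\<lambda>x. \<lambda>y. if y \<in> V - X \<and> E x y then 1 else 0) ` X)"

definition tree_leaves :: "nat set \<Rightarrow> nat set set \<Rightarrow> nat set" where
  "tree_leaves N F = {x\<in>N. tree_degree F x = 1}"

definition tree_side :: "nat set set \<Rightarrow> nat set \<Rightarrow> nat \<Rightarrow> nat set" where
  "tree_side F e a = {y. (a, y) \<in> (tree_adj (F - {e}))\<^sup>*}"

definition is_rank_decomposition ::
  "'a set \<Rightarrow> nat set \<Rightarrow> nat set set \<Rightarrow> ('a \<Rightarrow> nat) \<Rightarrow> bool" where
  "is_rank_decomposition V N F L \<longleftrightarrow> is_tree N F \<and> card N \<ge> 2
     \<and> (\<forall>x\<in>N. tree_degree F x \<le> 3)
     \<and> bij_betw L V (tree_leaves N F)"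

text \<open>Width of edge e = {a,b}: cut-rank of the vertices whose leaves lie on a's side.
  (Cut-rank is symmetric, so the choice of side is immaterial.)\<close>
definition rd_width ::
  "'a set \<Rightarrow> ('a \<Rightarrow> 'a \<Rightarrow> bool) \<Rightarrow> nat set set \<Rightarrow> ('a \<Rightarrow> nat) \<Rightarrow> nat" where
  "rd_width V E F L = Max ((\<lambda>e. cut_rank V E {v\<in>V. L v \<in> tree_side F e (SOME a. a \<in> e)}) ` F)"

definition rankwidth :: "'a set \<Rightarrow> ('a \<Rightarrow> 'a \<Rightarrow> bool) \<Rightarrow> nat" where
  "rankwidth V E = (if card V \<le> 1 then 0
     else Min {rd_width V E F L | N F L. is_rank_decomposition V N F L})"

end

theory Submission
  imports Defs "HOL-Library.Ramsey" "HOL-Library.FuncSet"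
begin

lemma tree_adj_sym: "sym (tree_adj G)"
  by (auto simp: tree_adj_def sym_def insert_commute)

lemma rtr_sym: "(x,y) \<in> (tree_adj G)\<^sup>* \<Longrightarrow> (y,x) \<in> (tree_adj G)\<^sup>*"
  using sym_rtrancl[OF tree_adj_sym] by (auto simp: sym_def)

lemma tree_adj_mono: "G \<subseteq> G' \<Longrightarrow> tree_adj G \<subseteq> tree_adj G'"
  by (auto simp: tree_adj_def)

lemma rtr_mono: "G \<subseteq> G' \<Longrightarrow> (x,y) \<in> (tree_adj G)\<^sup>* \<Longrightarrow> (x,y) \<in> (tree_adj G')\<^sup>*"
  using rtrancl_mono[OF tree_adj_mono] by blast

lemma rtr_insert_edge:
  assumes "(p,q) \<in> (R \<union> {(x,y),(y,x)})\<^sup>*"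
  shows "(p,q) \<in> R\<^sup>* \<or> ((p,x) \<in> R\<^sup>* \<or> (p,y) \<in> R\<^sup>*) \<and> ((x,q) \<in> R\<^sup>* \<or> (y,q) \<in> R\<^sup>*)"
  using assms
proof (induction rule: rtrancl_induct)
  case base
  then show ?case by simp
next
  case (step q q')
  from step.hyps(2) show ?case
  proof
    assume "(q,q') \<in> R"
    with step.IH show ?thesis by (meson rtrancl_into_rtrancl)
  next
    assume "(q,q') \<in> {(x,y),(y,x)}"
    with step.IH show ?thesis by auto
  qed
qed

lemma tree_adj_insert:
  "tree_adj (insert {a,b} G) \<subseteq> tree_adj G \<union> {(a,b),(b,a)}"
  by (auto simp: tree_adj_def doubleton_eq_iff)

lemma tree_adj_insert_other:
  "\<not> (\<exists>a b. e = {a,b}) \<Longrightarrow> tree_adj (insert e G) = tree_adj G"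
  by (auto simp: tree_adj_def)

lemma comp_count:
  assumes "finite G" "finite N"
  shows "\<exists>D \<subseteq> N. card N \<le> card D + card G \<and>
           (\<forall>d1\<in>D. \<forall>d2\<in>D. (d1,d2) \<in> (tree_adj G)\<^sup>* \<longrightarrow> d1 = d2)"
  using assms(1)
proof (induction G rule: finite_induct)
  case empty
  have "tree_adj {} = {}" by (simp add: tree_adj_def)
  then show ?case by (intro exI[of _ N]) auto
next
  case (insert e G)
  obtain D where D: "D \<subseteq> N" "card N \<le> card D + card G"
    "\<forall>d1\<in>D. \<forall>d2\<in>D. (d1,d2) \<in> (tree_adj G)\<^sup>* \<longrightarrow> d1 = d2"
    using insert.IH by blast
  have cins: "card (insert e G) = card G + 1" using insert.hyps by simp
  show ?case
  proof (cases "\<exists>a b. e = {a,b}")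
    case False
    then show ?thesis using D cins tree_adj_insert_other[OF False] by (intro exI[of _ D]) auto
  next
    case True
    then obtain a b where e: "e = {a,b}" by blast
    let ?R = "tree_adj G"
    define S where "S = {d\<in>D. (d,a) \<in> ?R\<^sup>*}"
    define D' where "D' = D - S"
    have finD: "finite D" using D(1) assms(2) finite_subset by blast
    have "card S \<le> 1"
    proof -
      have "\<forall>s1\<in>S. \<forall>s2\<in>S. s1 = s2"
      proof (intro ballI)
        fix s1 s2 assume s: "s1 \<in> S" "s2 \<in> S"
        then have "(s1,a) \<in> ?R\<^sup>*" "(a,s2) \<in> ?R\<^sup>*" unfolding S_def using rtr_sym by auto
        then have "(s1,s2) \<in> ?R\<^sup>*" by (rule rtrancl_trans)
        then show "s1 = s2" using D(3) s unfolding S_def by blast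
      qed
      moreover have "finite S" using finD S_def by auto
      ultimately show ?thesis using card_le_Suc0_iff_eq by auto
    qed
    moreover have "card D' = card D - card S"
      unfolding D'_def by (rule card_Diff_subset) (use finD S_def in auto)
    ultimately have c1: "card N \<le> card D' + card (insert e G)" using D(2) cins by linarith
    have pw: "\<forall>d1\<in>D'. \<forall>d2\<in>D'. (d1,d2) \<in> (tree_adj (insert e G))\<^sup>* \<longrightarrow> d1 = d2"
    proof (intro ballI impI)
      fix d1 d2 assume d: "d1 \<in> D'" "d2 \<in> D'" "(d1,d2) \<in> (tree_adj (insert e G))\<^sup>*"
      have "(tree_adj (insert e G))\<^sup>* \<subseteq> (?R \<union> {(a,b),(b,a)})\<^sup>*"
        using rtrancl_mono[OF tree_adj_insert[of a b G]] e by simp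
      then have "(d1,d2) \<in> (?R \<union> {(a,b),(b,a)})\<^sup>*" using d(3) by blast
      from rtr_insert_edge[OF this]
      have dis: "(d1,d2) \<in> ?R\<^sup>* \<or> ((d1,a) \<in> ?R\<^sup>* \<or> (d1,b) \<in> ?R\<^sup>*) \<and> ((a,d2) \<in> ?R\<^sup>* \<or> (b,d2) \<in> ?R\<^sup>*)" .
      have n1: "(d1,a) \<notin> ?R\<^sup>*" using d(1) unfolding D'_def S_def by blast
      have n2: "(a,d2) \<notin> ?R\<^sup>*"
      proof
        assume "(a,d2) \<in> ?R\<^sup>*"
        then have "(d2,a) \<in> ?R\<^sup>*" by (rule rtr_sym)
        then show False using d(2) unfolding D'_def S_def by blast
      qed
      have "(d1,d2) \<in> ?R\<^sup>*"
      proof (cases "(d1,d2) \<in> ?R\<^sup>*")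
        case False
        then have "(d1,b) \<in> ?R\<^sup>*" "(b,d2) \<in> ?R\<^sup>*" using dis n1 n2 by blast+
        then show ?thesis by (rule rtrancl_trans)
      qed
      then show "d1 = d2" using D(3) d(1,2) unfolding D'_def by blast
    qed
    have "D' \<subseteq> N" using D(1) unfolding D'_def by blast
    then show ?thesis using c1 pw by blast
  qed
qed

lemma tree_F_sub: "is_tree N F \<Longrightarrow> F \<subseteq> Pow N"
  by (force simp: is_tree_def)

lemma tree_finF: "is_tree N F \<Longrightarrow> finite F"
  using tree_F_sub by (metis finite_Pow_iff is_tree_def rev_finite_subset)

lemma tree_edge: "is_tree N F \<Longrightarrow> e \<in> F \<Longrightarrow> \<exists>a b. e = {a,b} \<and> a \<in> N \<and> b \<in> N \<and> a \<noteq> b"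
  by (auto simp: is_tree_def)

lemma tree_conn: "is_tree N F \<Longrightarrow> x \<in> N \<Longrightarrow> y \<in> N \<Longrightarrow> (x,y) \<in> (tree_adj F)\<^sup>*"
  by (auto simp: is_tree_def)

lemma tree_adj_remove:
  "tree_adj G \<subseteq> tree_adj (G - {{a,b}}) \<union> {(a,b),(b,a)}"
  by (auto simp: tree_adj_def doubleton_eq_iff)

lemma tree_T1:
  assumes T: "is_tree N F" and ab: "{a,b} \<in> F" "a \<noteq> b"
  shows "(a,b) \<notin> (tree_adj (F - {{a,b}}))\<^sup>*"
proof
  assume r: "(a,b) \<in> (tree_adj (F - {{a,b}}))\<^sup>*"
  let ?R = "tree_adj (F - {{a,b}})"
  have "tree_adj F \<subseteq> ?R\<^sup>*"
  proof
    fix z assume "z \<in> tree_adj F"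
    then have "z \<in> ?R \<or> z = (a,b) \<or> z = (b,a)" using tree_adj_remove[of F a b] by blast
    then show "z \<in> ?R\<^sup>*" using r rtr_sym[OF r] by blast
  qed
  then have sub: "(tree_adj F)\<^sup>* \<subseteq> ?R\<^sup>*" by (rule rtrancl_subset_rtrancl)
  have abN: "a \<in> N" "b \<in> N" using tree_F_sub[OF T] ab by auto
  have finN: "finite N" using T unfolding is_tree_def by blast
  have finF: "finite F" using tree_finF[OF T] .
  have cN: "card N \<ge> 2"
  proof -
    have "{a,b} \<subseteq> N" using abN by auto
    then have "card {a,b} \<le> card N" using finN card_mono by blast
    then show ?thesis using ab by simp
  qed
  have "card F = card N - 1" using T unfolding is_tree_def by blast
  then have cF: "card (F - {{a,b}}) = card N - 2"
    using ab finF by (simp add: card_Diff_singleton)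
  obtain D where D: "D \<subseteq> N" "card N \<le> card D + card (F - {{a,b}})"
    "\<forall>d1\<in>D. \<forall>d2\<in>D. (d1,d2) \<in> ?R\<^sup>* \<longrightarrow> d1 = d2"
    using comp_count[of "F - {{a,b}}" N] finF finN by (meson finite_Diff)
  have "\<forall>d1\<in>D. \<forall>d2\<in>D. d1 = d2"
  proof (intro ballI)
    fix d1 d2 assume "d1 \<in> D" "d2 \<in> D"
    then have "(d1,d2) \<in> (tree_adj F)\<^sup>*" using D(1) tree_conn[OF T] by blast
    then have "(d1,d2) \<in> ?R\<^sup>*" using sub by blast
    then show "d1 = d2" using D(3) \<open>d1 \<in> D\<close> \<open>d2 \<in> D\<close> by blast
  qed
  moreover have "finite D" using finN D(1) finite_subset by blast
  ultimately have "card D \<le> 1" using card_le_Suc0_iff_eq[of D] by auto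
  then show False using D(2) cF cN by linarith
qed

lemma tree_T2:
  assumes T: "is_tree N F" and ab: "{a,b} \<in> F" and z: "z \<in> N"
  shows "(a,z) \<in> (tree_adj (F - {{a,b}}))\<^sup>* \<or> (b,z) \<in> (tree_adj (F - {{a,b}}))\<^sup>*"
proof -
  have "a \<in> N" using tree_F_sub[OF T] ab by auto
  then have "(a,z) \<in> (tree_adj F)\<^sup>*" using tree_conn[OF T] z by auto
  then have "(a,z) \<in> (tree_adj (F - {{a,b}}) \<union> {(a,b),(b,a)})\<^sup>*"
    using rtrancl_mono[OF tree_adj_remove[of F a b]] by blast
  from rtr_insert_edge[OF this] show ?thesis by auto
qed

lemma avoid:
  assumes "(d,y) \<in> (tree_adj G)\<^sup>*" "\<forall>z\<in>e. (d,z) \<notin> (tree_adj G)\<^sup>*"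
  shows "(d,y) \<in> (tree_adj (G - {e}))\<^sup>*"
  using assms(1)
proof (induction rule: rtrancl_induct)
  case base
  then show ?case by simp
next
  case (step y y')
  then have "y \<notin> e" using assms(2) by auto
  then have "(y,y') \<in> tree_adj (G - {e})" using step.hyps(2) by (auto simp: tree_adj_def)
  then show ?case using step.IH by (meson rtrancl_into_rtrancl)
qed

lemma side_N:
  assumes T: "is_tree N F" and p: "p \<in> N" and r: "(p,y) \<in> (tree_adj G)\<^sup>*" and G: "G \<subseteq> F"
  shows "y \<in> N"
  using r
proof (induction rule: rtrancl_induct)
  case base then show ?case using p .
next
  case (step y y')
  then have "{y,y'} \<in> F" using G by (auto simp: tree_adj_def)
  then show ?case using tree_F_sub[OF T] by auto
qed

declare mult_bit_eq_and[simp del] add_bit_eq_xor[simp del]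

lemma sum_apply_fun: "(\<Sum>a\<in>A. f a) x = (\<Sum>a\<in>A. f a x)"
  by (induction A rule: infinite_finite_induct) auto

lemma card_bit: "card (UNIV::bit set) = 2"
proof -
  have u: "(UNIV::bit set) = {0,1}" by (auto intro: bit.exhaust)
  have "card {0::bit,1} = 2" by simp
  then show ?thesis unfolding u .
qed

interpretation bv: vector_space "(\<lambda>(c::bit) (f::'a \<Rightarrow> bit). \<lambda>y. c * f y)"
  by unfold_locales (auto simp: fun_eq_iff algebra_simps)

lemma basis_repr:
  fixes W :: "('a \<Rightarrow> bit) set"
  assumes "finite W"
  obtains B where "B \<subseteq> W" "card B = bv.dim W" "finite B"
    "\<And>w. w \<in> W \<Longrightarrow> \<exists>u. w = (\<lambda>y. \<Sum>b\<in>B. u b * b y)"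
proof -
  obtain B where B: "B \<subseteq> W" "bv.independent B" "W \<subseteq> bv.span B" "card B = bv.dim W"
    using bv.basis_exists by blast
  have fB: "finite B" using B(1) assms finite_subset by blast
  have "\<exists>u. w = (\<lambda>y. \<Sum>b\<in>B. u b * b y)" if "w \<in> W" for w
  proof -
    have "w \<in> bv.span B" using that B(3) by blast
    then have "w \<in> range (\<lambda>u. \<Sum>v\<in>B. (\<lambda>y. u v * v y))"
      by (simp only: bv.span_finite[OF fB])
    then obtain u where "w = (\<Sum>v\<in>B. (\<lambda>y. u v * v y))" by blast
    then have "w = (\<lambda>y. \<Sum>b\<in>B. u b * b y)" by (simp only: fun_eq_iff sum_apply_fun) simp
    then show ?thesis by blast
  qed
  then show ?thesis using that B fB by blast
qed

lemma finite_bit: "finite (UNIV::bit set)"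
  by (rule card_ge_0_finite) (simp add: card_bit)

lemma finite_PiE_bit: "finite B \<Longrightarrow> finite (PiE B (\<lambda>_. UNIV::bit set))"
  by (rule finite_PiE) (auto simp: finite_bit)

lemma card_PiE_bit: "finite B \<Longrightarrow> card (PiE B (\<lambda>_. UNIV::bit set)) = 2 ^ card B"
  by (simp add: card_PiE card_bit)

lemma rows_card:
  assumes "finite X"
  shows "card ((\<lambda>x. \<lambda>y. if y \<in> V - X \<and> E x y then (1::bit) else 0) ` X) \<le> 2 ^ cut_rank V E X"
proof -
  let ?W = "(\<lambda>x. \<lambda>y. if y \<in> V - X \<and> E x y then (1::bit) else 0) ` X"
  have fW: "finite ?W" using assms by simp
  obtain B where B: "B \<subseteq> ?W" "card B = bv.dim ?W" "finite B"
    "\<And>w. w \<in> ?W \<Longrightarrow> \<exists>u. w = (\<lambda>y. \<Sum>b\<in>B. u b * b y)"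
    using basis_repr[OF fW] by blast
  let ?g = "\<lambda>u. (\<lambda>y. \<Sum>b\<in>B. u b * b y)"
  have "?W \<subseteq> ?g ` (PiE B (\<lambda>_. UNIV))"
  proof
    fix w assume "w \<in> ?W"
    then obtain u where u: "w = ?g u" using B(4) by blast
    have eq: "?g u = ?g (restrict u B)" by (rule ext, rule sum.cong[OF refl]) (simp only: restrict_apply')
    show "w \<in> ?g ` (PiE B (\<lambda>_. UNIV))"
    proof (rule image_eqI)
      show "w = ?g (restrict u B)" using u eq by (rule trans)
      show "restrict u B \<in> PiE B (\<lambda>_. UNIV)" by simp
    qed
  qed
  then have "card ?W \<le> card (?g ` (PiE B (\<lambda>_. UNIV)))"
    using B(3) by (intro card_mono finite_imageI finite_PiE_bit)
  also have "\<dots> \<le> card (PiE B (\<lambda>_. UNIV::bit set))" by (rule card_image_le) (rule finite_PiE_bit[OF B(3)])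
  also have "\<dots> = 2 ^ card B" using B(3) by (rule card_PiE_bit)
  finally have "card ?W \<le> 2 ^ card B" .
  then show ?thesis unfolding cut_rank_def B(2) .
qed

lemma cols_card:
  assumes "finite X" "X \<subseteq> V" and sym: "\<forall>x y. E x y \<longrightarrow> E y x"
  shows "card ((\<lambda>b. \<lambda>z. if z \<in> X \<and> E b z then (1::bit) else 0) ` (V - X)) \<le> 2 ^ cut_rank V E X"
proof -
  let ?r = "\<lambda>x. \<lambda>y. if y \<in> V - X \<and> E x y then (1::bit) else 0"
  let ?W = "?r ` X"
  have fW: "finite ?W" using assms by simp
  obtain B where B: "B \<subseteq> ?W" "card B = bv.dim ?W" "finite B"
    "\<And>w. w \<in> ?W \<Longrightarrow> \<exists>u. w = (\<lambda>y. \<Sum>b\<in>B. u b * b y)"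
    using basis_repr[OF fW] by blast
  have "\<forall>z\<in>X. \<exists>u. ?r z = (\<lambda>y. \<Sum>b\<in>B. u b * b y)" using B(4) by blast
  then obtain U where U0: "\<forall>z\<in>X. ?r z = (\<lambda>y. \<Sum>b\<in>B. U z b * b y)"
    using bchoice[of X "\<lambda>z u. ?r z = (\<lambda>y. \<Sum>b\<in>B. u b * b y)"] by blast
  then have U: "\<And>z. z \<in> X \<Longrightarrow> ?r z = (\<lambda>y. \<Sum>b\<in>B. U z b * b y)" by blast
  let ?g = "\<lambda>c. \<lambda>z. if z \<in> X then (\<Sum>w\<in>B. U z w * c w) else (0::bit)"
  have "(\<lambda>b. \<lambda>z. if z \<in> X \<and> E b z then (1::bit) else 0) ` (V - X) \<subseteq> ?g ` (PiE B (\<lambda>_. UNIV))"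
  proof
    fix c assume "c \<in> (\<lambda>b. \<lambda>z. if z \<in> X \<and> E b z then (1::bit) else 0) ` (V - X)"
    then obtain b' where b': "b' \<in> V - X" "c = (\<lambda>z. if z \<in> X \<and> E b' z then (1::bit) else 0)" by blast
    have "c = ?g (restrict (\<lambda>w. w b') B)"
    proof
      fix z
      show "c z = ?g (restrict (\<lambda>w. w b') B) z"
      proof (cases "z \<in> X")
        case True
        have "?r z b' = (\<Sum>w\<in>B. U z w * w b')" using fun_cong[OF U[OF True], of b'] by (simp only:)
        moreover have "?r z b' = (if E b' z then 1 else 0)" using b'(1) sym by auto
        moreover have "(\<Sum>w\<in>B. U z w * restrict (\<lambda>w. w b') B w) = (\<Sum>w\<in>B. U z w * w b')"
          by (rule sum.cong) auto
        ultimately show ?thesis using True b'(2) by simp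
      next
        case False
        then show ?thesis using b'(2) by simp
      qed
    qed
    then show "c \<in> ?g ` (PiE B (\<lambda>_. UNIV))"
      by (rule image_eqI[where x="restrict (\<lambda>w. w b') B"]) simp
  qed
  then have "card ((\<lambda>b. \<lambda>z. if z \<in> X \<and> E b z then (1::bit) else 0) ` (V - X)) \<le> card (?g ` (PiE B (\<lambda>_. UNIV)))"
    using B(3) by (intro card_mono finite_imageI finite_PiE_bit)
  also have "\<dots> \<le> card (PiE B (\<lambda>_. UNIV::bit set))" by (rule card_image_le) (rule finite_PiE_bit[OF B(3)])
  also have "\<dots> = 2 ^ card B" using B(3) by (rule card_PiE_bit)
  finally have "card ((\<lambda>b. \<lambda>z. if z \<in> X \<and> E b z then (1::bit) else 0) ` (V - X)) \<le> 2 ^ card B" .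
  then show ?thesis unfolding cut_rank_def B(2) .
qed

lemma cut_rank_le: "finite X \<Longrightarrow> cut_rank V E X \<le> card X"
proof -
  assume fX: "finite X"
  let ?W = "(\<lambda>x. \<lambda>y. if y \<in> V - X \<and> E x y then (1::bit) else 0) ` X"
  have "bv.dim ?W \<le> card ?W" by (rule bv.dim_le_card[OF bv.span_superset finite_imageI[OF fX]])
  also have "\<dots> \<le> card X" using fX by (rule card_image_le)
  finally show ?thesis unfolding cut_rank_def .
qed

abbreviation RR :: "nat set set \<Rightarrow> nat set \<Rightarrow> (nat \<times> nat) set" where
  "RR F e \<equiv> (tree_adj (F - {e}))\<^sup>*"

lemma RR_trans: "(x,y) \<in> RR F e \<Longrightarrow> (y,z) \<in> RR F e \<Longrightarrow> (x,z) \<in> RR F e"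
  by (rule rtrancl_trans)

lemma RR_edge: "{x,y} \<in> F \<Longrightarrow> x \<noteq> y \<Longrightarrow> {x,y} \<noteq> e \<Longrightarrow> (x,y) \<in> RR F e"
proof -
  assume "{x,y} \<in> F" "x \<noteq> y" "{x,y} \<noteq> e"
  then have "(x,y) \<in> tree_adj (F - {e})" by (simp add: tree_adj_def)
  then show ?thesis by (rule r_into_rtrancl)
qed

lemma card_fibers:
  assumes "finite S" "\<And>v. v \<in> S \<Longrightarrow> card {w\<in>S. f w = f v} \<le> m"
  shows "card S \<le> card (f ` S) * m"
proof -
  have "S = (\<Union>y\<in>f ` S. {w\<in>S. f w = y})" by blast
  then have "card S = card (\<Union>y\<in>f ` S. {w\<in>S. f w = y})" by simp
  also have "\<dots> \<le> (\<Sum>y\<in>f ` S. card {w\<in>S. f w = y})"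
    by (rule card_UN_le) (use assms(1) in simp)
  also have "\<dots> \<le> (\<Sum>y\<in>f ` S. m)"
  proof (rule sum_mono)
    fix y assume "y \<in> f ` S"
    then obtain v where "v \<in> S" "y = f v" by blast
    then show "card {w\<in>S. f w = y} \<le> m" using assms(2) by simp
  qed
  also have "\<dots> = card (f ` S) * m" by simp
  finally show ?thesis .
qed

locale twsetup =
  fixes V :: "'a set" and E :: "'a \<Rightarrow> 'a \<Rightarrow> bool" and N :: "nat set" and F :: "nat set set"
    and L :: "'a \<Rightarrow> nat" and R t k :: nat
  assumes sg: "simple_graph V E"
    and T: "is_tree N F"
    and deg: "\<forall>x\<in>N. tree_degree F x \<le> 3"
    and Lbij: "bij_betw L V (tree_leaves N F)"
    and noKt: "\<not> has_induced_Kt V E t"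
    and noKtt: "\<not> has_induced_Ktt V E t"
    and ram: "\<And>C. C \<subseteq> V \<Longrightarrow> card C \<ge> R \<Longrightarrow> \<exists>S\<subseteq>C. card S = t \<and> (is_clique E S \<or> is_stable E S)"
    and wid: "\<And>e. e \<in> F \<Longrightarrow> cut_rank V E {v\<in>V. L v \<in> tree_side F e (SOME a. a\<in>e)} \<le> k"
begin

lemma finV: "finite V" using sg unfolding simple_graph_def by blast
lemma Esym: "E x y \<Longrightarrow> E y x" using sg unfolding simple_graph_def by blast
lemma EV: "E x y \<Longrightarrow> x \<in> V \<and> y \<in> V \<and> x \<noteq> y" using sg unfolding simple_graph_def by blast
lemma LN: "v \<in> V \<Longrightarrow> L v \<in> N"
  using Lbij unfolding bij_betw_def tree_leaves_def by blast
lemma Linj: "inj_on L V" using Lbij unfolding bij_betw_def by blast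
lemma finF: "finite F" using tree_finF[OF T] .
lemma finN: "finite N" using T unfolding is_tree_def by blast

definition vside :: "nat set \<Rightarrow> 'a \<Rightarrow> 'a set" where
  "vside e v = {w\<in>V. (L v, L w) \<in> RR F e}"
definition pat :: "'a set \<Rightarrow> 'a \<Rightarrow> 'a \<Rightarrow> bit" where
  "pat A w = (\<lambda>z. if z \<in> V - A \<and> E w z then 1 else 0)"
definition cls :: "nat set \<Rightarrow> 'a \<Rightarrow> 'a set" where
  "cls e v = {w \<in> vside e v. pat (vside e v) w = pat (vside e v) v}"
definition small :: "nat set \<Rightarrow> 'a \<Rightarrow> bool" where
  "small e v \<longleftrightarrow> card (cls e v) < R"
definition sepr :: "nat \<Rightarrow> nat \<Rightarrow> nat set set" where
  "sepr p x = {e\<in>F. (p,x) \<notin> RR F e}"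
definition Tv :: "'a \<Rightarrow> nat set" where
  "Tv v = {x\<in>N. \<forall>e\<in>sepr (L v) x. small e v}"
definition bagf :: "nat \<Rightarrow> 'a set" where
  "bagf x = {v\<in>V. x \<in> Tv v}"

lemma cls_V: "cls e v \<subseteq> V" unfolding cls_def vside_def by blast

lemma pat_one:
  assumes "pat A w = pat A u" "z \<in> V - A" "E u z"
  shows "E w z"
proof -
  have "pat A w z = pat A u z" using assms(1) by simp
  then have "(if z \<in> V - A \<and> E w z then (1::bit) else 0) = 1" using assms(2,3) unfolding pat_def by simp
  then show ?thesis by (cases "E w z") simp_all
qed

lemma small_or:
  assumes eF: "e \<in> F" and uv: "E u v" and sep: "(L u, L v) \<notin> RR F e"
  shows "small e u \<or> small e v"
proof (rule ccontr)
  assume "\<not> (small e u \<or> small e v)"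
  then have cu: "card (cls e u) \<ge> R" and cv: "card (cls e v) \<ge> R" unfolding small_def by auto
  have uV: "u \<in> V" and vV: "v \<in> V" using EV[OF uv] by auto
  have nclq: "\<not> is_clique E S" if "S \<subseteq> V" "card S = t" for S
    using noKt that unfolding has_induced_Kt_def by blast
  obtain S where S: "S \<subseteq> cls e u" "card S = t" "is_clique E S \<or> is_stable E S"
    using ram[OF cls_V cu] by blast
  have Sst: "is_stable E S" using S nclq cls_V by blast
  obtain S2 where S2: "S2 \<subseteq> cls e v" "card S2 = t" "is_clique E S2 \<or> is_stable E S2"
    using ram[OF cls_V cv] by blast
  have S2st: "is_stable E S2" using S2 nclq cls_V by blast
  have disj: "vside e u \<inter> vside e v = {}"
  proof (rule ccontr)
    assume "vside e u \<inter> vside e v \<noteq> {}"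
    then obtain w where "(L u, L w) \<in> RR F e" "(L v, L w) \<in> RR F e" unfolding vside_def by blast
    then have "(L u, L v) \<in> RR F e" using rtr_sym RR_trans by blast
    then show False using sep by blast
  qed
  have vnot: "v \<in> V - vside e u" using vV sep unfolding vside_def by blast
  have comp: "E a b" if a: "a \<in> S" and b: "b \<in> S2" for a b
  proof -
    have acl: "a \<in> cls e u" using a S(1) by blast
    then have "E a v" using pat_one[OF _ vnot uv] unfolding cls_def by blast
    then have va: "E v a" by (rule Esym)
    have "a \<in> V - vside e v" using acl disj unfolding cls_def vside_def by blast
    moreover have "b \<in> cls e v" using b S2(1) by blast
    ultimately have "E b a" using pat_one[OF _ _ va] unfolding cls_def by blast
    then show ?thesis by (rule Esym)
  qed
  have dj: "S \<inter> S2 = {}" using S(1) S2(1) disj unfolding cls_def by blast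
  have SV: "S \<subseteq> V" "S2 \<subseteq> V" using S(1) S2(1) cls_V by blast+
  have "has_induced_Ktt V E t"
    unfolding has_induced_Ktt_def
    by (rule exI[of _ S], rule exI[of _ S2]) (simp add: dj SV S(2) S2(2) Sst S2st comp)
  then show False using noKtt by blast
qed

lemma small_mono:
  assumes sub: "\<forall>y. (L v, y) \<in> RR F f \<longrightarrow> (L v, y) \<in> RR F e" and sm: "small e v"
  shows "small f v"
proof -
  have vs: "vside f v \<subseteq> vside e v" using sub unfolding vside_def by blast
  have "cls f v \<subseteq> cls e v"
  proof
    fix w assume w: "w \<in> cls f v"
    then have wf: "w \<in> vside f v" and pf: "pat (vside f v) w = pat (vside f v) v" unfolding cls_def by auto
    have "pat (vside e v) w = pat (vside e v) v"
    proof
      fix z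
      show "pat (vside e v) w z = pat (vside e v) v z"
      proof (cases "z \<in> V - vside e v")
        case True
        then have z2: "z \<in> V - vside f v" using vs by blast
        have "pat (vside f v) w z = pat (vside f v) v z" using pf by simp
        then show ?thesis using True z2 unfolding pat_def by simp
      next
        case False
        then show ?thesis unfolding pat_def by simp
      qed
    qed
    then show "w \<in> cls e v" using wf vs unfolding cls_def by blast
  qed
  then have "card (cls f v) \<le> card (cls e v)"
    by (rule card_mono[rotated]) (rule finite_subset[OF cls_V finV])
  then show ?thesis using sm unfolding small_def by simp
qed

lemma edge_at:
  assumes x: "x \<in> N" and y: "y \<in> N" and xy: "x \<noteq> y"
  shows "\<exists>e\<in>F. x \<in> e \<and> (x,y) \<notin> RR F e"
proof -
  have r: "(x,y) \<in> (tree_adj F)\<^sup>*" using tree_conn[OF T x y] .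
  have "y \<noteq> x \<longrightarrow> (\<exists>e\<in>F. x \<in> e \<and> (x,y) \<notin> RR F e)"
    using r
  proof (induction rule: rtrancl_induct)
    case base
    then show ?case by simp
  next
    case (step y0 y)
    show ?case
    proof
      assume yx: "y \<noteq> x"
      have e0: "{y0,y} \<in> F" "y0 \<noteq> y" using step.hyps(2) unfolding tree_adj_def by auto
      show "\<exists>e\<in>F. x \<in> e \<and> (x,y) \<notin> RR F e"
      proof (cases "y0 = x")
        case True
        then show ?thesis using tree_T1[OF T e0] e0 by blast
      next
        case False
        then obtain e where e: "e \<in> F" "x \<in> e" "(x,y0) \<notin> RR F e" using step.IH by blast
        have "(x,y) \<notin> RR F e"
        proof
          assume xy': "(x,y) \<in> RR F e"
          show False
          proof (cases "{y0,y} = e")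
            case True
            then show False using e(2) False yx by blast
          next
            case False
            then have "(y0,y) \<in> RR F e" using RR_edge[OF e0] by blast
            then have "(y,y0) \<in> RR F e" by (rule rtr_sym)
            then have "(x,y0) \<in> RR F e" using xy' by (rule RR_trans[rotated])
            then show False using e(3) by blast
          qed
        qed
        then show ?thesis using e by blast
      qed
    qed
  qed
  then show ?thesis using xy by blast
qed

lemma other_end:
  assumes "e \<in> F" "x \<in> e"
  obtains y where "e = {x,y}" "y \<in> N" "x \<noteq> y" "x \<in> N"
proof -
  obtain a b where ab: "e = {a,b}" "a \<in> N" "b \<in> N" "a \<noteq> b" using tree_edge[OF T assms(1)] by blast
  show ?thesis
  proof (cases "x = a")
    case True
    then show ?thesis using that ab by blast
  next
    case False
    then have "x = b" using assms(2) ab by blast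
    then show ?thesis using that ab by (metis insert_commute)
  qed
qed

lemma sepr_fin: "finite (sepr p x)"
  unfolding sepr_def using finF by simp

lemma Tv_reach:
  assumes vV: "v \<in> V"
  shows "x \<in> Tv v \<Longrightarrow> (x, L v) \<in> (tree_adj F \<inter> (Tv v \<times> Tv v))\<^sup>*"
proof (induction "card (sepr (L v) x)" arbitrary: x rule: less_induct)
  case less
  let ?p = "L v"
  have pN: "?p \<in> N" using LN[OF vV] .
  have xN: "x \<in> N" using less.prems unfolding Tv_def by blast
  show ?case
  proof (cases "x = ?p")
    case True
    then show ?thesis by simp
  next
    case False
    obtain e where e: "e \<in> F" "x \<in> e" "(x,?p) \<notin> RR F e" using edge_at[OF xN pN False] by blast
    obtain x' where x': "e = {x,x'}" "x' \<in> N" "x \<noteq> x'" using other_end[OF e(1,2)] by blast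
    have "(x,?p) \<in> RR F {x,x'} \<or> (x',?p) \<in> RR F {x,x'}"
      using tree_T2[OF T _ pN, of x x'] e(1) x'(1) by blast
    then have x'p: "(x',?p) \<in> RR F e" using e(3) x'(1) by blast
    have sub: "sepr ?p x' \<subseteq> sepr ?p x"
    proof
      fix g assume g: "g \<in> sepr ?p x'"
      then have gF: "g \<in> F" and npx': "(?p,x') \<notin> RR F g" unfolding sepr_def by auto
      have "g \<noteq> e" using npx' x'p rtr_sym by blast
      then have "(x,x') \<in> RR F g" using RR_edge[of x x' F g] e(1) x'(1,3) by blast
      then have "(?p,x) \<notin> RR F g" using npx' RR_trans by blast
      then show "g \<in> sepr ?p x" using gF unfolding sepr_def by blast
    qed
    have "e \<in> sepr ?p x" using e rtr_sym unfolding sepr_def by blast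
    moreover have "e \<notin> sepr ?p x'" using x'p rtr_sym unfolding sepr_def by blast
    ultimately have psub: "sepr ?p x' \<subset> sepr ?p x" using sub by blast
    then have lt: "card (sepr ?p x') < card (sepr ?p x)" using psubset_card_mono[OF sepr_fin] by blast
    have x'T: "x' \<in> Tv v" using less.prems sub x'(2) unfolding Tv_def by blast
    have "(x', ?p) \<in> (tree_adj F \<inter> (Tv v \<times> Tv v))\<^sup>*" using less.hyps[OF lt x'T] .
    moreover have "(x,x') \<in> tree_adj F \<inter> (Tv v \<times> Tv v)"
      using e(1) x'(1,3) x'T less.prems unfolding tree_adj_def by blast
    ultimately show ?thesis by (rule converse_rtrancl_into_rtrancl[rotated])
  qed
qed

lemma Tv_conn:
  assumes vV: "v \<in> V"
  shows "tree_connected_subset F (Tv v)"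
proof -
  let ?S = "tree_adj F \<inter> (Tv v \<times> Tv v)"
  have "sym ?S" using tree_adj_sym[of F] unfolding sym_def by blast
  then have sS: "sym (?S\<^sup>*)" by (rule sym_rtrancl)
  show ?thesis unfolding tree_connected_subset_def
  proof (intro ballI)
    fix x y assume "x \<in> Tv v" "y \<in> Tv v"
    then have "(x, L v) \<in> ?S\<^sup>*" "(y, L v) \<in> ?S\<^sup>*" using Tv_reach[OF vV] by blast+
    then show "(x,y) \<in> ?S\<^sup>*" using sS unfolding sym_def by (meson rtrancl_trans)
  qed
qed

end

context twsetup
begin

lemma side_subN: "p \<in> N \<Longrightarrow> {y. (p,y) \<in> RR F g} \<subseteq> N"
  using side_N[OF T, of p _ "F - {g}"] by blast

lemma cover:
  assumes uv: "E u v"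
  shows "\<exists>z\<in>N. u \<in> bagf z \<and> v \<in> bagf z"
proof -
  have uV: "u \<in> V" and vV: "v \<in> V" using EV[OF uv] by auto
  define p where "p = L u"
  define q where "q = L v"
  have pN: "p \<in> N" using LN[OF uV] p_def by simp
  have qN: "q \<in> N" using LN[OF vV] q_def by simp
  define Xu where "Xu = {e\<in>sepr p q. \<not> small e u}"
  show ?thesis
  proof (cases "Xu = {}")
    case True
    have "q \<in> Tv u" unfolding Tv_def using True qN unfolding Xu_def p_def by blast
    moreover have "q \<in> Tv v" unfolding Tv_def sepr_def using qN unfolding q_def by simp
    ultimately show ?thesis using uV vV qN unfolding bagf_def by blast
  next
    case False
    then obtain e0 where "e0 \<in> Xu" by blast
    then obtain es where es: "es \<in> Xu"
      and esmin: "\<And>g. g \<in> Xu \<Longrightarrow> card {y. (p,y) \<in> RR F es} \<le> card {y. (p,y) \<in> RR F g}"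
      using ex_has_least_nat[of "\<lambda>g. g \<in> Xu" e0 "\<lambda>g. card {y. (p,y) \<in> RR F g}"] by blast
    have esF: "es \<in> F" and esep: "(p,q) \<notin> RR F es" and nsu: "\<not> small es u"
      using es unfolding Xu_def sepr_def by auto
    have svs: "small es v" using small_or[OF esF uv] esep nsu unfolding p_def q_def by blast
    obtain c d where cd: "es = {c,d}" "c \<in> N" "d \<in> N" "c \<noteq> d" using tree_edge[OF T esF] by blast
    have "(c,p) \<in> RR F {c,d} \<or> (d,p) \<in> RR F {c,d}" using tree_T2[OF T _ pN, of c d] esF cd(1) by blast
    then obtain a b where ab: "es = {a,b}" "a \<in> N" "b \<in> N" "a \<noteq> b" "(p,a) \<in> RR F es"
    proof
      assume "(c,p) \<in> RR F {c,d}"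
      then have "(p,c) \<in> RR F es" using cd(1) rtr_sym by blast
      then show ?thesis using that cd by blast
    next
      assume "(d,p) \<in> RR F {c,d}"
      then have "(p,d) \<in> RR F es" using cd(1) rtr_sym by blast
      moreover have "es = {d,c}" using cd(1) by (simp add: insert_commute)
      ultimately show ?thesis using that cd by blast
    qed
    have abF: "{a,b} \<in> F" using esF ab(1) by simp
    have T1es: "(a,b) \<notin> RR F es" using tree_T1[OF T abF ab(4)] ab(1) by simp
    have finside: "finite {y. (p,y) \<in> RR F g}" for g
      using side_subN[OF pN] finN finite_subset by blast
    have aTu: "a \<in> Tv u"
      unfolding Tv_def
    proof (intro CollectI conjI ballI)
      show "a \<in> N" using ab(2) .
      fix g assume "g \<in> sepr (L u) a"
      then have gF: "g \<in> F" and pa: "(p,a) \<notin> RR F g" unfolding sepr_def p_def by auto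
      have gne: "g \<noteq> es" using pa ab(5) by blast
      have abg: "(a,b) \<in> RR F g" using RR_edge[OF abF ab(4)] gne ab(1) by blast
      have pb: "(p,b) \<notin> RR F g"
      proof
        assume "(p,b) \<in> RR F g"
        moreover have "(b,a) \<in> RR F g" using abg by (rule rtr_sym)
        ultimately have "(p,a) \<in> RR F g" by (rule RR_trans)
        then show False using pa by blast
      qed
      have sub: "(p,y) \<in> RR F es" if "(p,y) \<in> RR F g" for y
      proof -
        have "\<forall>z\<in>es. (p,z) \<notin> RR F g" using pa pb ab(1) by blast
        then have "(p,y) \<in> (tree_adj (F - {g} - {es}))\<^sup>*" using avoid[OF that] by blast
        then show ?thesis using rtr_mono[of "F - {g} - {es}" "F - {es}"] by blast
      qed
      have aes: "a \<in> {y. (p,y) \<in> RR F es}" using ab(5) by blast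
      have ang: "a \<notin> {y. (p,y) \<in> RR F g}" using pa by blast
      have "{y. (p,y) \<in> RR F g} \<subset> {y. (p,y) \<in> RR F es}" using sub aes ang by blast
      then have lt: "card {y. (p,y) \<in> RR F g} < card {y. (p,y) \<in> RR F es}"
        by (rule psubset_card_mono[OF finside])
      have gsep: "(p,q) \<notin> RR F g"
      proof
        assume pq: "(p,q) \<in> RR F g"
        have "(a,q) \<in> RR F {a,b} \<or> (b,q) \<in> RR F {a,b}" using tree_T2[OF T abF qN] .
        moreover have "(a,q) \<notin> RR F es"
        proof
          assume "(a,q) \<in> RR F es"
          then have "(p,q) \<in> RR F es" using ab(5) RR_trans by blast
          then show False using esep by blast
        qed
        ultimately have bq: "(b,q) \<in> RR F es" using ab(1) by blast
        obtain c' d' where cd': "g = {c',d'}" "c' \<in> N" "d' \<in> N" "c' \<noteq> d'" using tree_edge[OF T gF] by blast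
        have gF': "{c',d'} \<in> F" using gF cd'(1) by simp
        have pg: "(p,z) \<in> RR F es" if "z \<in> g" for z
        proof -
          have "(c',p) \<in> RR F {c',d'} \<or> (d',p) \<in> RR F {c',d'}" using tree_T2[OF T gF' pN] .
          then obtain w0 where w0: "w0 \<in> g" "(p,w0) \<in> RR F g" using cd'(1) rtr_sym by blast
          have pw0: "(p,w0) \<in> RR F es" using sub[OF w0(2)] .
          have "(w0,z) \<in> RR F es"
          proof (cases "w0 = z")
            case True then show ?thesis by simp
          next
            case False
            then have "{w0,z} = g" using w0(1) that cd'(1) by auto
            then have "{w0,z} \<in> F" "{w0,z} \<noteq> es" using gF gne by auto
            then show ?thesis using RR_edge False by blast
          qed
          then show ?thesis using pw0 RR_trans by blast
        qed
        have "\<forall>z\<in>g. (b,z) \<notin> RR F es"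
        proof (intro ballI notI)
          fix z assume z: "z \<in> g" "(b,z) \<in> RR F es"
          have "(z,b) \<in> RR F es" using z(2) by (rule rtr_sym)
          then have "(p,b) \<in> RR F es" using pg[OF z(1)] RR_trans by blast
          moreover have "(a,p) \<in> RR F es" using ab(5) by (rule rtr_sym)
          ultimately have "(a,b) \<in> RR F es" using RR_trans by blast
          then show False using T1es by blast
        qed
        then have "(b,q) \<in> (tree_adj (F - {es} - {g}))\<^sup>*" using avoid[OF bq] by blast
        then have "(b,q) \<in> RR F g" using rtr_mono[of "F - {es} - {g}" "F - {g}"] by blast
        then have "(a,q) \<in> RR F g" using abg RR_trans by blast
        then have "(q,a) \<in> RR F g" by (rule rtr_sym)
        then have "(p,a) \<in> RR F g" using pq RR_trans by blast
        then show False using pa by blast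
      qed
      show "small g u"
      proof (rule ccontr)
        assume "\<not> small g u"
        then have "g \<in> Xu" unfolding Xu_def sepr_def using gF gsep by blast
        then have "card {y. (p,y) \<in> RR F es} \<le> card {y. (p,y) \<in> RR F g}" by (rule esmin)
        then show False using lt by simp
      qed
    qed
    have aTv: "a \<in> Tv v"
      unfolding Tv_def
    proof (intro CollectI conjI ballI)
      show "a \<in> N" using ab(2) .
      fix h assume "h \<in> sepr (L v) a"
      then have hF: "h \<in> F" and qa: "(q,a) \<notin> RR F h" unfolding sepr_def q_def by auto
      show "small h v"
      proof (cases "h = es")
        case True
        then show ?thesis using svs by simp
      next
        case False
        have abh: "(a,b) \<in> RR F h" using RR_edge[OF abF ab(4)] False ab(1) by blast
        have qb: "(q,b) \<notin> RR F h"
        proof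
          assume "(q,b) \<in> RR F h"
          moreover have "(b,a) \<in> RR F h" using abh by (rule rtr_sym)
          ultimately have "(q,a) \<in> RR F h" by (rule RR_trans)
          then show False using qa by blast
        qed
        have "\<forall>y. (L v, y) \<in> RR F h \<longrightarrow> (L v, y) \<in> RR F es"
        proof (intro allI impI)
          fix y assume y: "(L v, y) \<in> RR F h"
          have "\<forall>z\<in>es. (q,z) \<notin> RR F h" using qa qb ab(1) by blast
          then have "(q,y) \<in> (tree_adj (F - {h} - {es}))\<^sup>*" using avoid[of q y "F - {h}" es] y q_def by blast
          then show "(L v, y) \<in> RR F es" using rtr_mono[of "F - {h} - {es}" "F - {es}"] q_def by blast
        qed
        then show ?thesis using small_mono svs by blast
      qed
    qed
    show ?thesis using aTu aTv uV vV ab(2) unfolding bagf_def by blast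
  qed
qed

end

context twsetup
begin

lemma side_small_card:
  assumes eF: "{x,y} \<in> F" and xy: "x \<noteq> y"
  shows "card {v\<in>V. (y, L v) \<in> RR F {x,y} \<and> small {x,y} v} \<le> (R - 1) * 2^k"
proof -
  define e where "e = {x,y}"
  define A where "A = {w\<in>V. (y, L w) \<in> RR F e}"
  have vs: "vside e v = A" if "v \<in> A" for v
  proof -
    have yv: "(y, L v) \<in> RR F e" using that A_def by blast
    have iff: "(L v, L w) \<in> RR F e \<longleftrightarrow> (y, L w) \<in> RR F e" for w
    proof
      assume "(L v, L w) \<in> RR F e" then show "(y, L w) \<in> RR F e" using RR_trans[OF yv] by blast
    next
      assume "(y, L w) \<in> RR F e" then show "(L v, L w) \<in> RR F e" using RR_trans[OF rtr_sym[OF yv]] by blast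
    qed
    show ?thesis unfolding vside_def A_def using iff by blast
  qed
  define P where "P = {v\<in>V. (y, L v) \<in> RR F e \<and> small e v}"
  have PA: "P \<subseteq> A" unfolding P_def A_def by blast
  have finA: "finite A" unfolding A_def using finV by simp
  have finP: "finite P" using PA finA finite_subset by blast
  have "card P \<le> card (pat A ` P) * (R - 1)"
  proof (rule card_fibers[OF finP])
    fix v assume v: "v \<in> P"
    have vA: "v \<in> A" using v PA by blast
    have "{w\<in>P. pat A w = pat A v} \<subseteq> cls e v"
      unfolding cls_def vs[OF vA] using PA by blast
    then have "card {w\<in>P. pat A w = pat A v} \<le> card (cls e v)"
      by (rule card_mono[rotated]) (rule finite_subset[OF cls_V finV])
    moreover have "card (cls e v) < R" using v unfolding P_def small_def by blast
    ultimately show "card {w\<in>P. pat A w = pat A v} \<le> R - 1" by linarith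
  qed
  moreover have "card (pat A ` P) \<le> card (pat A ` A)"
    by (rule card_mono) (use finA PA in auto)
  moreover have "card (pat A ` A) \<le> 2^k"
  proof -
    define a0 where "a0 = (SOME a. a \<in> e)"
    have a0e: "a0 \<in> e" unfolding a0_def e_def by (rule someI[of _ x]) simp
    define X0 where "X0 = {v\<in>V. L v \<in> tree_side F e a0}"
    have crk: "cut_rank V E X0 \<le> k" using wid[of e] eF unfolding X0_def a0_def e_def by simp
    have X0': "X0 = {v\<in>V. (a0, L v) \<in> RR F e}" unfolding X0_def tree_side_def by simp
    have p2: "(2::nat)^cut_rank V E X0 \<le> 2^k" by (rule power_increasing[OF crk]) simp
    have finX0: "finite X0" unfolding X0' using finV by simp
    have X0V: "X0 \<subseteq> V" unfolding X0' by blast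
    show ?thesis
    proof (cases "a0 = y")
      case True
      then have AX0: "A = X0" unfolding A_def X0' by simp
      have "pat A = (\<lambda>w. \<lambda>z. if z \<in> V - X0 \<and> E w z then (1::bit) else 0)"
        by (rule ext) (simp only: pat_def AX0)
      then have "pat A ` A = (\<lambda>w. \<lambda>z. if z \<in> V - X0 \<and> E w z then (1::bit) else 0) ` X0"
        using AX0 by simp
      then have "card (pat A ` A) \<le> 2 ^ cut_rank V E X0" using rows_card[OF finX0, of V E] by simp
      then show ?thesis using p2 by linarith
    next
      case False
      then have a0x: "a0 = x" using a0e e_def by blast
      have T1': "(x,y) \<notin> RR F e" unfolding e_def using tree_T1[OF T eF xy] .
      have AV: "A = V - X0"
      proof (rule set_eqI)
        fix w
        show "w \<in> A \<longleftrightarrow> w \<in> V - X0"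
        proof (cases "w \<in> V")
          case True
          have LwN: "L w \<in> N" using LN[OF True] .
          have "(x, L w) \<in> RR F e \<or> (y, L w) \<in> RR F e" unfolding e_def using tree_T2[OF T eF LwN] .
          moreover have "\<not> ((x, L w) \<in> RR F e \<and> (y, L w) \<in> RR F e)"
          proof
            assume "(x, L w) \<in> RR F e \<and> (y, L w) \<in> RR F e"
            then have "(x,y) \<in> RR F e" using rtr_sym RR_trans by blast
            then show False using T1' by blast
          qed
          ultimately show ?thesis unfolding A_def X0' a0x using True by blast
        next
          case False
          then show ?thesis unfolding A_def X0' by blast
        qed
      qed
      have VA: "V - A = X0" using AV X0V by blast
      have "pat A = (\<lambda>b. \<lambda>z. if z \<in> X0 \<and> E b z then (1::bit) else 0)"
        by (rule ext) (simp only: pat_def VA)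
      then have "pat A ` A = (\<lambda>b. \<lambda>z. if z \<in> X0 \<and> E b z then (1::bit) else 0) ` (V - X0)"
        using AV by simp
      moreover have "\<forall>x y. E x y \<longrightarrow> E y x" using Esym by blast
      ultimately have "card (pat A ` A) \<le> 2 ^ cut_rank V E X0" using cols_card[OF finX0 X0V] by simp
      then show ?thesis using p2 by linarith
    qed
  qed
  ultimately have "card P \<le> 2^k * (R - 1)"
    by (meson le_trans mult_le_mono1)
  then show ?thesis unfolding P_def e_def by (simp add: mult.commute)
qed

lemma bag_card:
  assumes xN: "x \<in> N"
  shows "card (bagf x) \<le> 1 + 3 * ((R - 1) * 2^k)"
proof -
  define Ex where "Ex = {e\<in>F. x \<in> e}"
  define S where "S e = {v\<in>V. (x, L v) \<notin> RR F e \<and> small e v}" for e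
  have sub: "bagf x \<subseteq> {v\<in>V. L v = x} \<union> (\<Union>e\<in>Ex. S e)"
  proof
    fix v assume v: "v \<in> bagf x"
    then have vV: "v \<in> V" and xT: "x \<in> Tv v" unfolding bagf_def by auto
    show "v \<in> {v\<in>V. L v = x} \<union> (\<Union>e\<in>Ex. S e)"
    proof (cases "L v = x")
      case True then show ?thesis using vV by blast
    next
      case False
      then have "x \<noteq> L v" by simp
      then obtain e where e: "e \<in> F" "x \<in> e" "(x, L v) \<notin> RR F e"
        using edge_at[OF xN LN[OF vV]] by blast
      then have "e \<in> sepr (L v) x" unfolding sepr_def using rtr_sym by blast
      then have "small e v" using xT unfolding Tv_def by blast
      then show ?thesis using e vV unfolding Ex_def S_def by blast
    qed
  qed
  have finL: "finite {v\<in>V. L v = x}" using finV by simp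
  have c1: "card {v\<in>V. L v = x} \<le> 1"
  proof -
    have "\<forall>v1\<in>{v\<in>V. L v = x}. \<forall>v2\<in>{v\<in>V. L v = x}. v1 = v2"
      using Linj unfolding inj_on_def by auto
    then show ?thesis using card_le_Suc0_iff_eq[OF finL] by simp
  qed
  have c2: "card (S e) \<le> (R - 1) * 2^k" if "e \<in> Ex" for e
  proof -
    have eF: "e \<in> F" and xe: "x \<in> e" using that unfolding Ex_def by auto
    obtain y where y: "e = {x,y}" "y \<in> N" "x \<noteq> y" using other_end[OF eF xe] by blast
    have "S e \<subseteq> {v\<in>V. (y, L v) \<in> RR F {x,y} \<and> small {x,y} v}"
    proof
      fix v assume v: "v \<in> S e"
      then have vV: "v \<in> V" unfolding S_def by blast
      have "(x, L v) \<in> RR F {x,y} \<or> (y, L v) \<in> RR F {x,y}"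
        using tree_T2[OF T _ LN[OF vV], of x y] eF y(1) by blast
      then show "v \<in> {v\<in>V. (y, L v) \<in> RR F {x,y} \<and> small {x,y} v}"
        using v y(1) unfolding S_def by blast
    qed
    moreover have "finite {v\<in>V. (y, L v) \<in> RR F {x,y} \<and> small {x,y} v}" using finV by simp
    ultimately have "card (S e) \<le> card {v\<in>V. (y, L v) \<in> RR F {x,y} \<and> small {x,y} v}"
      by (rule card_mono[rotated])
    also have "\<dots> \<le> (R - 1) * 2^k" using side_small_card[of x y] eF y by simp
    finally show ?thesis .
  qed
  have finEx: "finite Ex" unfolding Ex_def using finF by simp
  have "card (\<Union>e\<in>Ex. S e) \<le> (\<Sum>e\<in>Ex. card (S e))" by (rule card_UN_le[OF finEx])
  also have "\<dots> \<le> (\<Sum>e\<in>Ex. (R - 1) * 2^k)" by (rule sum_mono) (rule c2)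
  also have "\<dots> = card Ex * ((R - 1) * 2^k)" by simp
  also have "\<dots> \<le> 3 * ((R - 1) * 2^k)"
  proof (rule mult_right_mono)
    show "card Ex \<le> 3" using deg xN unfolding Ex_def tree_degree_def by blast
  qed simp
  finally have c3: "card (\<Union>e\<in>Ex. S e) \<le> 3 * ((R - 1) * 2^k)" .
  have finU: "finite ({v\<in>V. L v = x} \<union> (\<Union>e\<in>Ex. S e))"
    using finL finEx finV unfolding S_def by simp
  have "card (bagf x) \<le> card ({v\<in>V. L v = x} \<union> (\<Union>e\<in>Ex. S e))"
    by (rule card_mono[OF finU sub])
  also have "\<dots> \<le> card {v\<in>V. L v = x} + card (\<Union>e\<in>Ex. S e)" by (rule card_Un_le)
  finally show ?thesis using c1 c3 by linarith
qed

lemma Tv_bag: "v \<in> V \<Longrightarrow> {x\<in>N. v \<in> bagf x} = Tv v"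
  unfolding bagf_def Tv_def by blast

lemma is_td: "is_tree_decomposition V E N F bagf"
  unfolding is_tree_decomposition_def
proof (intro conjI ballI allI impI)
  show "is_tree N F" by (rule T)
  fix x assume "x \<in> N"
  then show "bagf x \<subseteq> V" unfolding bagf_def by blast
next
  fix v assume vV: "v \<in> V"
  have "sepr (L v) (L v) = {}" unfolding sepr_def by simp
  then have "L v \<in> Tv v" unfolding Tv_def using LN[OF vV] by simp
  then show "\<exists>x\<in>N. v \<in> bagf x" using vV LN[OF vV] unfolding bagf_def by blast
next
  fix u v assume "E u v"
  then show "\<exists>x\<in>N. u \<in> bagf x \<and> v \<in> bagf x" by (rule cover)
next
  fix v assume vV: "v \<in> V"
  show "tree_connected_subset F {x\<in>N. v \<in> bagf x}"
    unfolding Tv_bag[OF vV] by (rule Tv_conn[OF vV])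
qed

lemma width_bound: "td_width N bagf \<le> int (1 + 3 * ((R - 1) * 2^k)) - 1"
proof -
  have ne: "N \<noteq> {}" using T unfolding is_tree_def by blast
  have "Max ((\<lambda>x. card (bagf x)) ` N) \<le> 1 + 3 * ((R - 1) * 2^k)"
    using bag_card finN ne by (simp add: Max_le_iff)
  then have "int (Max ((\<lambda>x. card (bagf x)) ` N)) \<le> int (1 + 3 * ((R - 1) * 2^k))" by (rule of_nat_mono)
  then show ?thesis unfolding td_width_def by linarith
qed

end

definition ramP :: "nat \<Rightarrow> nat \<Rightarrow> bool" where
  "ramP t n \<longleftrightarrow> (\<forall>(V::nat set) E. simple_graph V E \<and> card V \<ge> n \<longrightarrow>
      (\<exists>S\<subseteq>V. card S = t \<and> (is_clique E S \<or> is_stable E S)))"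

lemma ramsey_number_eq: "ramsey_number t = (LEAST n. ramP t n)"
  unfolding ramsey_number_def ramP_def by simp

lemma ramP_ex: "\<exists>n. ramP t n"
proof -
  obtain r where r: "\<forall>(V::nat set) (Es::nat set set). finite V \<and> card V \<ge> r \<longrightarrow>
    (\<exists>R \<subseteq> V. card R = t \<and> clique R Es \<or> card R = t \<and> indep R Es)"
    using ramsey2[of t t] by blast
  have "ramP t r" unfolding ramP_def
  proof (intro allI impI)
    fix V :: "nat set" and E assume a: "simple_graph V E \<and> r \<le> card V"
    have sg: "finite V" "\<And>x y. E x y \<Longrightarrow> x \<noteq> y" "\<And>x y. E x y \<Longrightarrow> E y x"
      using a unfolding simple_graph_def by blast+
    define Es where "Es = {{x,y} | x y. E x y}"
    obtain S where S: "S \<subseteq> V" "card S = t \<and> clique S Es \<or> card S = t \<and> indep S Es"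
      using r sg(1) a by blast
    have c: "is_clique E S" if "clique S Es"
      unfolding is_clique_def
    proof (intro ballI impI)
      fix x y assume "x \<in> S" "y \<in> S" "x \<noteq> y"
      then have "{x,y} \<in> Es" using that unfolding clique_def by blast
      then obtain a b where "{x,y} = {a,b}" "E a b" unfolding Es_def by blast
      then show "E x y" using sg(3) by (metis doubleton_eq_iff)
    qed
    have s: "is_stable E S" if "indep S Es"
      unfolding is_stable_def
    proof (intro ballI notI)
      fix x y assume xy: "x \<in> S" "y \<in> S" "E x y"
      then have "x \<noteq> y" using sg(2) by blast
      moreover have "{x,y} \<in> Es" using xy(3) unfolding Es_def by blast
      ultimately show False using that xy(1,2) unfolding indep_def by blast
    qed
    show "\<exists>S\<subseteq>V. card S = t \<and> (is_clique E S \<or> is_stable E S)"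
      using S c s by blast
  qed
  then show ?thesis by blast
qed

lemma ramP_R: "ramP t (ramsey_number t)"
proof -
  have "ramP t (LEAST n. ramP t n)" by (rule LeastI_ex[OF ramP_ex])
  then show ?thesis by (simp only: ramsey_number_eq)
qed

lemma ramP_ge: "ramP t n \<Longrightarrow> t \<le> n"
proof -
  assume rp: "ramP t n"
  have "simple_graph {0..<n} (\<lambda>_ _. False) \<and> card {0..<n} \<ge> n" unfolding simple_graph_def by simp
  from rp[unfolded ramP_def, rule_format, OF this]
  obtain S where "S \<subseteq> {0..<n}" "card S = t" by blast
  then show ?thesis by (metis card_atLeastLessThan card_mono diff_zero finite_atLeastLessThan)
qed

lemma R_ge: "t \<le> ramsey_number t"
  by (rule ramP_ge[OF ramP_R])

lemma ram_transfer:
  fixes V :: "'a set"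
  assumes sg: "simple_graph V E" and C: "C \<subseteq> V" "card C \<ge> ramsey_number t"
  shows "\<exists>S\<subseteq>C. card S = t \<and> (is_clique E S \<or> is_stable E S)"
proof -
  have finV: "finite V" using sg unfolding simple_graph_def by blast
  have finC: "finite C" using C(1) finV finite_subset by blast
  have irr: "\<And>x y. E x y \<Longrightarrow> x \<noteq> y" and sym: "\<And>x y. E x y \<Longrightarrow> E y x"
    using sg unfolding simple_graph_def by blast+
  obtain h where h: "bij_betw h C {0..<card C}" using ex_bij_betw_finite_nat[OF finC] by blast
  define g where "g = inv_into C h"
  have g: "bij_betw g {0..<card C} C" unfolding g_def by (rule bij_betw_inv_into[OF h])
  define E' where "E' i j \<longleftrightarrow> i < card C \<and> j < card C \<and> E (g i) (g j)" for i j
  have A: "\<forall>x y. E' x y \<longrightarrow> x \<in> {0..<card C} \<and> y \<in> {0..<card C} \<and> x \<noteq> y"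
  proof (intro allI impI)
    fix x y assume e: "E' x y"
    then have "x < card C" "y < card C" "E (g x) (g y)" unfolding E'_def by auto
    then show "x \<in> {0..<card C} \<and> y \<in> {0..<card C} \<and> x \<noteq> y" using irr by auto
  qed
  have B: "\<forall>x y. E' x y \<longrightarrow> E' y x" unfolding E'_def using sym by blast
  have sg': "simple_graph {0..<card C} E'"
    unfolding simple_graph_def using A B by simp
  have "card {0..<card C} \<ge> ramsey_number t" using C(2) by simp
  then obtain S' where S': "S' \<subseteq> {0..<card C}" "card S' = t" "is_clique E' S' \<or> is_stable E' S'"
    using ramP_R[of t] sg' unfolding ramP_def by blast
  have injg: "inj_on g {0..<card C}" using g bij_betw_def by blast
  have injS: "inj_on g S'" using inj_on_subset[OF injg S'(1)] .
  have SC: "g ` S' \<subseteq> C" using g S'(1) unfolding bij_betw_def by blast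
  have cS: "card (g ` S') = t" using card_image[OF injS] S'(2) by simp
  have "is_clique E (g ` S') \<or> is_stable E (g ` S')"
  proof (cases "is_clique E' S'")
    case True
    have "is_clique E (g ` S')" unfolding is_clique_def
    proof (intro ballI impI)
      fix x y assume "x \<in> g ` S'" "y \<in> g ` S'" "x \<noteq> y"
      then obtain i j where ij: "i \<in> S'" "j \<in> S'" "x = g i" "y = g j" "i \<noteq> j" by blast
      then have "E' i j" using True unfolding is_clique_def by blast
      then show "E x y" using ij unfolding E'_def by blast
    qed
    then show ?thesis by blast
  next
    case False
    then have st: "is_stable E' S'" using S'(3) by blast
    have "is_stable E (g ` S')" unfolding is_stable_def
    proof (intro ballI notI)
      fix x y assume "x \<in> g ` S'" "y \<in> g ` S'" "E x y"
      then obtain i j where ij: "i \<in> S'" "j \<in> S'" "E (g i) (g j)" by blast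
      then have "E' i j" using S'(1) unfolding E'_def by auto
      then show False using st ij unfolding is_stable_def by blast
    qed
    then show ?thesis by blast
  qed
  then show ?thesis using SC cS by blast
qed

lemma tw_le:
  assumes td: "is_tree_decomposition V E N F bag" and finV: "finite V"
  shows "treewidth V E \<le> td_width N bag"
proof -
  let ?S = "{td_width N bag | N F bag. is_tree_decomposition V E N F bag}"
  have "?S \<subseteq> {-1..int (card V)}"
  proof
    fix w assume "w \<in> ?S"
    then obtain N' F' bag' where w: "w = td_width N' bag'" "is_tree_decomposition V E N' F' bag'" by blast
    have T': "finite N'" "N' \<noteq> {}" using w(2) unfolding is_tree_decomposition_def is_tree_def by blast+
    have bV: "\<forall>x\<in>N'. bag' x \<subseteq> V" using w(2) unfolding is_tree_decomposition_def by blast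
    have "\<forall>x\<in>N'. card (bag' x) \<le> card V" using bV card_mono finV by blast
    then have "Max ((\<lambda>x. card (bag' x)) ` N') \<le> card V" using T' by (simp add: Max_le_iff)
    then have "int (Max ((\<lambda>x. card (bag' x)) ` N')) \<le> int (card V)" by (rule of_nat_mono)
    then show "w \<in> {-1..int (card V)}" unfolding w(1) td_width_def by simp
  qed
  then have fin: "finite ?S" by (rule finite_subset) simp
  have "td_width N bag \<in> ?S" using td by blast
  then show ?thesis unfolding treewidth_def using fin by (rule Min_le[rotated])
qed

lemma rank_decomp_exists:
  fixes V :: "'a set"
  assumes finV: "finite V" and c2: "card V \<ge> 2"
  shows "\<exists>N F (L::'a \<Rightarrow> nat). is_rank_decomposition V N F L"
proof -
  define n where "n = card V"
  have n2: "n \<ge> 2" using c2 n_def by simp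
  obtain h where h: "bij_betw h V {0..<n}" using ex_bij_betw_finite_nat[OF finV] n_def by blast
  define F1 where "F1 = (\<lambda>i. {i, n+i}) ` {0..<n}"
  define F2 where "F2 = (\<lambda>i. {n+i, Suc (n+i)}) ` {0..<n-1}"
  define F where "F = F1 \<union> F2"
  define N where "N = {0..<2*n}"
  have Fmem: "e \<in> F \<longleftrightarrow> (\<exists>i<n. e = {i, n+i}) \<or> (\<exists>i. Suc i < n \<and> e = {n+i, Suc (n+i)})" for e
  proof -
    have a: "e \<in> F1 \<longleftrightarrow> (\<exists>i<n. e = {i, n+i})" unfolding F1_def by auto
    have b: "e \<in> F2 \<longleftrightarrow> (\<exists>i. Suc i < n \<and> e = {n+i, Suc (n+i)})"
    proof
      assume "e \<in> F2"
      then obtain i where "i \<in> {0..<n-1}" "e = {n+i, Suc (n+i)}" unfolding F2_def by blast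
      then show "\<exists>i. Suc i < n \<and> e = {n+i, Suc (n+i)}" by (intro exI[of _ i]) auto
    next
      assume "\<exists>i. Suc i < n \<and> e = {n+i, Suc (n+i)}"
      then obtain i where "Suc i < n" "e = {n+i, Suc (n+i)}" by blast
      then show "e \<in> F2" unfolding F2_def by (intro image_eqI[of _ _ i]) auto
    qed
    show ?thesis unfolding F_def using a b by blast
  qed
  have ed: "\<forall>e\<in>F. \<exists>x y. e = {x,y} \<and> x \<in> N \<and> y \<in> N \<and> x \<noteq> y"
  proof
    fix e assume "e \<in> F"
    then have "(\<exists>i<n. e = {i, n+i}) \<or> (\<exists>i. Suc i < n \<and> e = {n+i, Suc (n+i)})" using Fmem by blast
    then show "\<exists>x y. e = {x,y} \<and> x \<in> N \<and> y \<in> N \<and> x \<noteq> y"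
    proof
      assume "\<exists>i<n. e = {i, n+i}"
      then obtain i where "i < n" "e = {i, n+i}" by blast
      then show ?thesis unfolding N_def using n2 by (intro exI[of _ i] exI[of _ "n+i"]) auto
    next
      assume "\<exists>i. Suc i < n \<and> e = {n+i, Suc (n+i)}"
      then obtain i where "Suc i < n" "e = {n+i, Suc (n+i)}" by blast
      then show ?thesis unfolding N_def by (intro exI[of _ "n+i"] exI[of _ "Suc (n+i)"]) auto
    qed
  qed
  have spine: "i < n \<Longrightarrow> (n+i, n) \<in> (tree_adj F)\<^sup>*" for i
  proof (induction i)
    case 0 then show ?case by simp
  next
    case (Suc i)
    have "{n+i, Suc (n+i)} \<in> F" using Fmem Suc.prems by blast
    then have "(n + Suc i, n+i) \<in> tree_adj F" unfolding tree_adj_def by (simp add: insert_commute)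
    moreover have "(n+i, n) \<in> (tree_adj F)\<^sup>*" using Suc by simp
    ultimately show ?case by (rule converse_rtrancl_into_rtrancl)
  qed
  have ton: "(x, n) \<in> (tree_adj F)\<^sup>*" if "x \<in> N" for x
  proof (cases "x < n")
    case True
    have "{x, n+x} \<in> F" using Fmem True by blast
    then have "(x, n+x) \<in> tree_adj F" unfolding tree_adj_def using True by simp
    moreover have "(n+x, n) \<in> (tree_adj F)\<^sup>*" using spine True by blast
    ultimately show ?thesis by (rule converse_rtrancl_into_rtrancl)
  next
    case False
    then have "x = n + (x - n)" "x - n < n" using that unfolding N_def by auto
    then show ?thesis using spine by metis
  qed
  have conn: "\<forall>x\<in>N. \<forall>y\<in>N. (x,y) \<in> (tree_adj F)\<^sup>*"
  proof (intro ballI)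
    fix x y assume "x \<in> N" "y \<in> N"
    then have "(x,n) \<in> (tree_adj F)\<^sup>*" "(n,y) \<in> (tree_adj F)\<^sup>*" using ton rtr_sym by blast+
    then show "(x,y) \<in> (tree_adj F)\<^sup>*" by (rule rtrancl_trans)
  qed
  have inj1: "inj_on (\<lambda>i. {i, n+i}) {0..<n}"
    unfolding inj_on_def by (auto simp: doubleton_eq_iff)
  have inj2: "inj_on (\<lambda>i. {n+i, Suc (n+i)}) {0..<n-1}"
    unfolding inj_on_def by (auto simp: doubleton_eq_iff)
  have c1: "card F1 = n" unfolding F1_def using card_image[OF inj1] by simp
  have c2': "card F2 = n - 1" unfolding F2_def using card_image[OF inj2] by simp
  have dj: "F1 \<inter> F2 = {}" unfolding F1_def F2_def by (auto simp: doubleton_eq_iff)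
  have cF: "card F = 2*n - 1"
    unfolding F_def using card_Un_disjoint[of F1 F2] dj c1 c2' n2 unfolding F1_def F2_def by simp
  have cN: "card N = 2*n" unfolding N_def by simp
  have T: "is_tree N F"
    unfolding is_tree_def using ed conn cF cN n2 unfolding N_def by auto
  have deg_leaf: "{e\<in>F. x \<in> e} = {{x, n+x}}" if "x < n" for x
  proof
    show "{e\<in>F. x \<in> e} \<subseteq> {{x, n+x}}"
    proof
      fix e assume e: "e \<in> {e\<in>F. x \<in> e}"
      then have "(\<exists>i<n. e = {i, n+i}) \<or> (\<exists>i. Suc i < n \<and> e = {n+i, Suc (n+i)})" using Fmem by blast
      then show "e \<in> {{x, n+x}}" using e that by auto
    qed
    show "{{x, n+x}} \<subseteq> {e\<in>F. x \<in> e}" using Fmem that by blast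
  qed
  have deg_sp: "{e\<in>F. x \<in> e} \<subseteq> {{x - n, x}, {x - 1, x}, {x, Suc x}}" if "n \<le> x" for x
  proof
    fix e assume e: "e \<in> {e\<in>F. x \<in> e}"
    then have "(\<exists>i<n. e = {i, n+i}) \<or> (\<exists>i. Suc i < n \<and> e = {n+i, Suc (n+i)})" using Fmem by blast
    then show "e \<in> {{x - n, x}, {x - 1, x}, {x, Suc x}}"
    proof
      assume "\<exists>i<n. e = {i, n+i}"
      then obtain i where i: "i < n" "e = {i, n+i}" by blast
      then have "x = n + i" using e that by auto
      then show ?thesis using i by simp
    next
      assume "\<exists>i. Suc i < n \<and> e = {n+i, Suc (n+i)}"
      then obtain i where i: "Suc i < n" "e = {n+i, Suc (n+i)}" by blast
      then have "x = n + i \<or> x = Suc (n+i)" using e by auto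
      then show ?thesis using i by (auto simp: insert_commute)
    qed
  qed
  have card3: "card {a, b, c::nat set} \<le> 3" for a b c
    by (simp add: card_insert_if)
  have finF: "finite F" unfolding F_def F1_def F2_def by simp
  have deg: "\<forall>x\<in>N. tree_degree F x \<le> 3"
  proof
    fix x assume "x \<in> N"
    show "tree_degree F x \<le> 3"
    proof (cases "x < n")
      case True
      then show ?thesis unfolding tree_degree_def using deg_leaf by simp
    next
      case False
      then have "card {e\<in>F. x \<in> e} \<le> card {{x - n, x}, {x - 1, x}, {x, Suc x}}"
        using deg_sp by (intro card_mono) auto
      then show ?thesis unfolding tree_degree_def using card3 le_trans by blast
    qed
  qed
  have leaves: "tree_leaves N F = {0..<n}"
  proof (rule set_eqI)
    fix x
    show "x \<in> tree_leaves N F \<longleftrightarrow> x \<in> {0..<n}"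
    proof (cases "x < n")
      case True
      then show ?thesis unfolding tree_leaves_def tree_degree_def N_def using deg_leaf by simp
    next
      case False
      have "tree_degree F x \<noteq> 1" if xN: "x < 2*n"
      proof -
        define j where "j = x - n"
        have j: "j < n" "x = n + j" using False xN unfolding j_def by auto
        have e1: "{j, x} \<in> {e\<in>F. x \<in> e}" using Fmem j by auto
        obtain e2 where e2: "e2 \<in> {e\<in>F. x \<in> e}" "e2 \<noteq> {j, x}"
        proof (cases "Suc j < n")
          case True
          have "{x, Suc x} \<in> {e\<in>F. x \<in> e}" using Fmem True j by auto
          moreover have "{x, Suc x} \<noteq> {j, x}" using j by (auto simp: doubleton_eq_iff)
          ultimately show ?thesis using that by blast
        next
          case False
          then have j1: "j \<ge> 1" using j n2 by linarith
          have "Suc (j - 1) < n" using j j1 by linarith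
          then have "{n + (j - 1), Suc (n + (j-1))} \<in> F" using Fmem by blast
          moreover have "{n + (j - 1), Suc (n + (j-1))} = {x - 1, x}" using j j1 by auto
          ultimately have "{x - 1, x} \<in> {e\<in>F. x \<in> e}" by simp
          moreover have "{x - 1, x} \<noteq> {j, x}" using j j1 by (auto simp: doubleton_eq_iff)
          ultimately show ?thesis using that by blast
        qed
        have "{{j,x}, e2} \<subseteq> {e\<in>F. x \<in> e}" using e1 e2 by blast
        then have "card {{j,x}, e2} \<le> card {e\<in>F. x \<in> e}" by (rule card_mono[rotated]) (simp add: finF)
        moreover have "card {{j,x}, e2} = 2" using e2(2) by simp
        ultimately show ?thesis unfolding tree_degree_def by simp
      qed
      then show ?thesis unfolding tree_leaves_def N_def using False by auto
    qed
  qed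
  have "is_rank_decomposition V N F h"
    unfolding is_rank_decomposition_def using T cN n2 deg h leaves by simp
  then show ?thesis by blast
qed

lemma rw_attained:
  fixes V :: "'a set"
  assumes finV: "finite V" and c2: "card V \<ge> 2"
  shows "\<exists>N F L. is_rank_decomposition V N F L \<and> rd_width V E F L = rankwidth V E"
proof -
  let ?W = "{rd_width V E F L | N F L. is_rank_decomposition V N F L}"
  have bound: "rd_width V E F L \<le> card V" if rd: "is_rank_decomposition V N F L" for N F L
  proof -
    have T: "is_tree N F" and cN: "card N \<ge> 2" using rd unfolding is_rank_decomposition_def by blast+
    have finF: "finite F" using tree_finF[OF T] .
    have "card F = card N - 1" using T unfolding is_tree_def by blast
    then have Fne: "F \<noteq> {}" using cN by auto
    have "\<forall>e\<in>F. cut_rank V E {v\<in>V. L v \<in> tree_side F e (SOME a. a\<in>e)} \<le> card V"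
    proof
      fix e
      let ?X = "{v\<in>V. L v \<in> tree_side F e (SOME a. a\<in>e)}"
      have "finite ?X" using finV by simp
      then have "cut_rank V E ?X \<le> card ?X" by (rule cut_rank_le)
      also have "card ?X \<le> card V" by (rule card_mono[OF finV]) blast
      finally show "cut_rank V E ?X \<le> card V" .
    qed
    then show ?thesis unfolding rd_width_def using finF Fne by (simp add: Max_le_iff)
  qed
  have "?W \<subseteq> {..card V}"
  proof
    fix w assume "w \<in> ?W"
    then obtain N F L where "w = rd_width V E F L" "is_rank_decomposition V N F L" by blast
    then show "w \<in> {..card V}" using bound by simp
  qed
  then have fin: "finite ?W" by (rule finite_subset) simp
  obtain N0 F0 and L0 :: "'a \<Rightarrow> nat" where "is_rank_decomposition V N0 F0 L0"
    using rank_decomp_exists[OF finV c2] by blast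
  then have ne: "?W \<noteq> {}" by blast
  have "Min ?W \<in> ?W" using Min_in[OF fin ne] .
  then obtain N F L where NFL: "Min ?W = rd_width V E F L" "is_rank_decomposition V N F L" by blast
  have "rankwidth V E = Min ?W" unfolding rankwidth_def using c2 by simp
  then show ?thesis using NFL by metis
qed

theorem mainTheorem6:
  fixes V :: "'a set" and E :: "'a \<Rightarrow> 'a \<Rightarrow> bool" and t :: nat
  assumes "simple_graph V E"
    and "t > 0"
    and "\<not> has_induced_Kt V E t"
    and "\<not> has_induced_Ktt V E t"
  shows "treewidth V E \<le> 3 * (int (ramsey_number t) - 1) * 2 ^ (rankwidth V E + 1) - 1"
proof -
  have sg: "simple_graph V E" using assms(1) .
  have finV: "finite V" using sg unfolding simple_graph_def by blast
  have EV: "\<And>x y. E x y \<Longrightarrow> x \<in> V \<and> y \<in> V" using sg unfolding simple_graph_def by blast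
  define R where "R = ramsey_number t"
  have Rt: "t \<le> R" unfolding R_def by (rule R_ge)
  have t2: "2 \<le> t" if ne: "V \<noteq> {}"
  proof (rule ccontr)
    assume "\<not> 2 \<le> t"
    then have t1: "t = 1" using assms(2) by simp
    obtain v where v: "v \<in> V" using ne by blast
    have "{v} \<subseteq> V" "card {v} = t" "is_clique E {v}" using v t1 unfolding is_clique_def by auto
    then have "has_induced_Kt V E t" unfolding has_induced_Kt_def by blast
    then show False using assms(3) by blast
  qed
  show ?thesis
  proof (cases "card V \<le> 1")
    case True
    have rw0: "rankwidth V E = 0" unfolding rankwidth_def using True by simp
    have tree0: "is_tree {0} {}" unfolding is_tree_def by simp
    have td: "is_tree_decomposition V E {0} {} (\<lambda>_. V)"
      unfolding is_tree_decomposition_def tree_connected_subset_def using tree0 EV by auto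
    have "treewidth V E \<le> td_width {0} (\<lambda>_. V)" by (rule tw_le[OF td finV])
    also have "\<dots> = int (card V) - 1" unfolding td_width_def by simp
    also have "\<dots> \<le> 3 * (int R - 1) * 2 ^ (0 + 1) - 1"
    proof (cases "V = {}")
      case True
      then show ?thesis using Rt assms(2) by simp
    next
      case False
      then have "2 \<le> R" using t2 Rt by simp
      then show ?thesis using True by simp
    qed
    finally show ?thesis unfolding rw0 R_def .
  next
    case False
    then have c2: "card V \<ge> 2" by simp
    then have "V \<noteq> {}" by auto
    then have R2: "2 \<le> R" using t2 Rt by simp
    obtain N F and L :: "'a \<Rightarrow> nat" where rd: "is_rank_decomposition V N F L" "rd_width V E F L = rankwidth V E"
      using rw_attained[OF finV c2, of E] by blast
    define k where "k = rankwidth V E"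
    have T: "is_tree N F" using rd(1) unfolding is_rank_decomposition_def by blast
    have finF: "finite F" using tree_finF[OF T] .
    have wid: "cut_rank V E {v\<in>V. L v \<in> tree_side F e (SOME a. a\<in>e)} \<le> k" if "e \<in> F" for e
    proof -
      have "cut_rank V E {v\<in>V. L v \<in> tree_side F e (SOME a. a\<in>e)} \<le> rd_width V E F L"
        unfolding rd_width_def using finF that by (intro Max_ge) auto
      then show ?thesis using rd(2) k_def by simp
    qed
    interpret tw: twsetup V E N F L R t k
    proof
      show "simple_graph V E" by (rule sg)
      show "is_tree N F" by (rule T)
      show "\<forall>x\<in>N. tree_degree F x \<le> 3" using rd(1) unfolding is_rank_decomposition_def by blast
      show "bij_betw L V (tree_leaves N F)" using rd(1) unfolding is_rank_decomposition_def by blast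
      show "\<not> has_induced_Kt V E t" by (rule assms(3))
      show "\<not> has_induced_Ktt V E t" by (rule assms(4))
      show "\<exists>S\<subseteq>C. card S = t \<and> (is_clique E S \<or> is_stable E S)" if "C \<subseteq> V" "R \<le> card C" for C
        using ram_transfer[OF sg that(1)] that(2) unfolding R_def by blast
      show "cut_rank V E {v\<in>V. L v \<in> tree_side F e (SOME a. a\<in>e)} \<le> k" if "e \<in> F" for e
        by (rule wid[OF that])
    qed
    have "treewidth V E \<le> td_width N tw.bagf" by (rule tw_le[OF tw.is_td finV])
    also have "\<dots> \<le> int (1 + 3 * ((R - 1) * 2^k)) - 1" by (rule tw.width_bound)
    also have "\<dots> = 3 * ((int R - 1) * 2^k)"
    proof -
      have R1: "1 \<le> R" using R2 by simp
      have i: "int (R - 1) = int R - 1" using R1 by (cases R) auto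
      have "int (1 + 3 * ((R - 1) * 2^k)) = 1 + 3 * (int (R - 1) * 2^k)" by simp
      then show ?thesis unfolding i by simp
    qed
    also have "\<dots> \<le> 3 * (int R - 1) * 2 ^ (k + 1) - 1"
    proof -
      have a: "1 \<le> int R - 1" using R2 by simp
      have b: "(1::int) \<le> 2^k" by simp
      have "1 * 1 \<le> (int R - 1) * 2^k" by (rule mult_mono[OF a b]) (use R2 in simp_all)
      moreover have "3 * (int R - 1) * 2 ^ (k + 1) = 6 * ((int R - 1) * 2^k)" by (simp add: algebra_simps)
      ultimately show ?thesis by linarith
    qed
    finally show ?thesis unfolding k_def R_def .
  qed
qed


end
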